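(* Let $\mathcal{L}$ be a linear space of random variables on $\Omega$ containing all constants, and let $P$ be a coherent$_1$ marginal prevision on $\mathcal{L}$. Let $\mathcal{B}=\{B: B\subseteq\Omega,\ B\in\mathcal{L},\ P(B)>0\}$ (events identified with indicators), and assume $XB\in\mathcal{L}$ for every $X\in\mathcal{L}$ and $B\in\mathcal{B}$. Define $L(X\mid B)=P(XB)/P(B)$ for $X\in\mathcal{L}$, $B\in\mathcal{B}$. Then $L(\cdot\mid\cdot)$ is a finitely additive conditional expectation on $\mathcal{L}\times\mathcal{B}$ (with $L=P$ as the underlying finitely additive expectation on $\mathcal{L}$).
   Context: Random variables are real-valued functions on a nonempty set $\Omega$; events are subsets, identified with indicator functions; $XB$ is the pointwise product. Previsions are extended real numbers; $P(X)=P(X\mid\Omega)$. Coherence$_1$: a collection $\{P(X_i\mid B_i):i\in I\}$ (with nonempty $B_i$) is coherent$_1$ if for every finite $\{i_1,\dots,i_n\}\subseteq I$, all real $\alpha_1,\dots,\alpha_n$ with $\alpha_j\ge 0$ whenever $P(X_{i_j}\mid B_{i_j})=+\infty$ and $\alpha_j\le 0$ whenever $P(X_{i_j}\mid B_{i_j})=-\infty$, and all real $c_j$ with $c_j=P(X_{i_j}\mid B_{i_j})$ whenever finite, $\sup_\omega \sum_{j=1}^n \alpha_j B_{i_j}(\omega)[X_{i_j}(\omega)-c_j]\ge 0$. A finitely additive expectation on a linear space $\mathcal{L}$ containing constants is a map $L:\mathcal{L}\to\mathbb{R}\cup\{\pm\infty\}$ that is nonnegative ($X\le Y$ implies $L(X)\le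 L(Y)$), extended-linear ($L(\alpha X+\beta Y)=\alpha L(X)+\beta L(Y)$ for real $\alpha,\beta$ whenever the right side is not $\infty-\infty$, with $0\times(\pm\infty)=0$), and has $L(1)=1$. Finitely additive conditional expectation: let $\mathcal{L}$ be a linear space of random variables, $\mathcal{B}$ a collection of nonempty events including $\Omega$, with $XB\in\mathcal{L}$ for all $X\in\mathcal{L}$, $B\in\mathcal{B}$, and let $L$ be a finitely additive expectation on $\mathcal{L}$. A map $L(\cdot\mid\cdot):\mathcal{L}\times\mathcal{B}\to\mathbb{R}\cup\{\pm\infty\}$ is a finitely additive conditional expectation if for each $B\in\mathcal{B}$, $L(\cdot\mid B)$ is a finitely additive expectation on $\mathcal{L}$ with $L(XB\mid B)=L(X\mid B)$ for all $X\in\mathcal{L}$, and $\{L(X\mid B):X\in\mathcal{L},B\in\mathcal{B}\}$ is a coherent$_1$ conditional prevision. *)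

theory Defs
  imports "HOL-Analysis.Analysis"
begin

text \<open>Random variables on \<Omega> are functions 'w \<Rightarrow> real, with \<Omega> = UNIV :: 'w set.
  Events are sets B :: 'w set, identified with indicator B.  Previsions are ereal.\<close>

definition rv_linear_space :: "('w \<Rightarrow> real) set \<Rightarrow> bool" where
  "rv_linear_space L \<longleftrightarrow>
     (\<forall>X\<in>L. \<forall>Y\<in>L. (\<lambda>w. X w + Y w) \<in> L) \<and>
     (\<forall>a::real. \<forall>X\<in>L. (\<lambda>w. a * X w) \<in> L) \<and>
     (\<forall>c::real. (\<lambda>w. c) \<in> L)"

definition coherent1 :: "(('w \<Rightarrow> real) \<times> 'w set) set \<Rightarrow> (('w \<Rightarrow> real) \<Rightarrow> 'w set \<Rightarrow> ereal) \<Rightarrow> bool" where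
  "coherent1 I Pr \<longleftrightarrow>
     (\<forall>i\<in>I. snd i \<noteq> {}) \<and>
     (\<forall>S (\<alpha>::('w \<Rightarrow> real) \<times> 'w set \<Rightarrow> real) (c::('w \<Rightarrow> real) \<times> 'w set \<Rightarrow> real).
        finite S \<and> S \<subseteq> I \<and>
        (\<forall>i\<in>S. Pr (fst i) (snd i) = \<infinity> \<longrightarrow> \<alpha> i \<ge> 0) \<and>
        (\<forall>i\<in>S. Pr (fst i) (snd i) = -\<infinity> \<longrightarrow> \<alpha> i \<le> 0) \<and>
        (\<forall>i\<in>S. \<bar>Pr (fst i) (snd i)\<bar> \<noteq> \<infinity> \<longrightarrow> Pr (fst i) (snd i) = ereal (c i))
        \<longrightarrow> (SUP w. ereal (\<Sum>i\<in>S. \<alpha> i * indicator (snd i) w * (fst i w - c i))) \<ge> 0)"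

definition coherent1_marginal :: "('w \<Rightarrow> real) set \<Rightarrow> (('w \<Rightarrow> real) \<Rightarrow> ereal) \<Rightarrow> bool" where
  "coherent1_marginal L P \<longleftrightarrow> coherent1 (L \<times> {UNIV}) (\<lambda>X B. P X)"

definition fa_expectation :: "('w \<Rightarrow> real) set \<Rightarrow> (('w \<Rightarrow> real) \<Rightarrow> ereal) \<Rightarrow> bool" where
  "fa_expectation L E \<longleftrightarrow>
     (\<forall>X\<in>L. \<forall>Y\<in>L. (\<forall>w. X w \<le> Y w) \<longrightarrow> E X \<le> E Y) \<and>
     (\<forall>X\<in>L. \<forall>Y\<in>L. \<forall>a b::real.
        \<not> ({ereal a * E X, ereal b * E Y} = {\<infinity>, -\<infinity>}) \<longrightarrow>
        E (\<lambda>w. a * X w + b * Y w) = ereal a * E X + ereal b * E Y) \<and>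
     E (\<lambda>w. 1) = 1"

definition fa_cond_expectation ::
  "('w \<Rightarrow> real) set \<Rightarrow> 'w set set \<Rightarrow> (('w \<Rightarrow> real) \<Rightarrow> ereal)
    \<Rightarrow> (('w \<Rightarrow> real) \<Rightarrow> 'w set \<Rightarrow> ereal) \<Rightarrow> bool" where
  "fa_cond_expectation L \<B> E Lc \<longleftrightarrow>
     rv_linear_space L \<and>
     (\<forall>B\<in>\<B>. B \<noteq> {}) \<and> UNIV \<in> \<B> \<and>
     (\<forall>X\<in>L. \<forall>B\<in>\<B>. (\<lambda>w. X w * indicator B w) \<in> L) \<and>
     fa_expectation L E \<and>
     (\<forall>B\<in>\<B>. fa_expectation L (\<lambda>X. Lc X B) \<and>
        (\<forall>X\<in>L. Lc (\<lambda>w. X w * indicator B w) B = Lc X B)) \<and>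
     coherent1 (L \<times> \<B>) Lc"

end

theory Submission
  imports Defs
begin

lemma G:
  assumes cm: "coherent1_marginal L P" and fin: "finite J" and VL: "\<forall>j\<in>J. V j \<in> L"
    and s1: "\<forall>j\<in>J. P (V j) = \<infinity> \<longrightarrow> \<beta> j \<ge> 0"
    and s2: "\<forall>j\<in>J. P (V j) = -\<infinity> \<longrightarrow> \<beta> j \<le> 0"
    and s3: "\<forall>j\<in>J. \<bar>P (V j)\<bar> \<noteq> \<infinity> \<longrightarrow> P (V j) = ereal (d j)"
  shows "(SUP w. ereal (\<Sum>j\<in>J. \<beta> j * (V j w - d j))) \<ge> 0"
proof -
  define A where "A f = (\<Sum>j\<in>{j\<in>J. V j = f}. \<beta> j)" for f
  define D where "D f = (\<Sum>j\<in>{j\<in>J. V j = f}. \<beta> j * d j)" for f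
  define C where "C f = (if \<bar>P f\<bar> \<noteq> \<infinity> then real_of_ereal (P f) else D f / A f)" for f
  define S where "S = (\<lambda>f. (f, UNIV::'a set)) ` (V ` J)"
  define \<alpha> where "\<alpha> = (\<lambda>i::('a \<Rightarrow> real) \<times> 'a set. A (fst i))"
  define c where "c = (\<lambda>i::('a \<Rightarrow> real) \<times> 'a set. C (fst i))"
  have key: "D f = A f * C f" if f: "f \<in> V ` J" for f
  proof (cases "\<bar>P f\<bar> \<noteq> \<infinity>")
    case True
    have "\<forall>j\<in>{j\<in>J. V j = f}. d j = real_of_ereal (P f)" using s3 True by force
    then have "D f = (\<Sum>j\<in>{j\<in>J. V j = f}. \<beta> j * real_of_ereal (P f))"
      unfolding D_def by (intro sum.cong) auto
    then show ?thesis using True by (simp add: A_def C_def sum_distrib_right)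
  next
    case NF: False
    show ?thesis
    proof (cases "A f = 0")
      case False
      then show ?thesis using NF by (simp add: C_def)
    next
      case A0: True
      have "\<forall>j\<in>{j\<in>J. V j = f}. \<beta> j = 0"
      proof (cases "P f = \<infinity>")
        case True
        then have "\<forall>j\<in>{j\<in>J. V j = f}. \<beta> j \<ge> 0" using s1 by auto
        moreover have "finite {j\<in>J. V j = f}" using fin by auto
        ultimately show ?thesis using A0 sum_nonneg_eq_0_iff[of "{j\<in>J. V j = f}" \<beta>] unfolding A_def by blast
      next
        case F2: False
        then have "P f = -\<infinity>" using NF by (cases "P f") auto
        then have "\<forall>j\<in>{j\<in>J. V j = f}. - \<beta> j \<ge> 0" using s2 by auto
        moreover have "finite {j\<in>J. V j = f}" using fin by auto
        moreover have "(\<Sum>j\<in>{j\<in>J. V j = f}. - \<beta> j) = 0" using A0 unfolding A_def by (simp add: sum_negf)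
        ultimately show ?thesis using sum_nonneg_eq_0_iff[of "{j\<in>J. V j = f}" "\<lambda>j. - \<beta> j"] by auto
      qed
      then have "D f = 0" unfolding D_def by simp
      then show ?thesis using A0 by simp
    qed
  qed
  have eq: "(\<Sum>i\<in>S. \<alpha> i * indicator (snd i) w * (fst i w - c i)) = (\<Sum>j\<in>J. \<beta> j * (V j w - d j))" for w
  proof -
    have "(\<Sum>i\<in>S. \<alpha> i * indicator (snd i) w * (fst i w - c i)) = (\<Sum>f\<in>V ` J. A f * (f w - C f))"
      unfolding S_def \<alpha>_def c_def by (subst sum.reindex) (auto simp: inj_on_def)
    also have "\<dots> = (\<Sum>f\<in>V ` J. (\<Sum>j\<in>{j\<in>J. V j = f}. \<beta> j * (V j w - d j)))"
    proof (intro sum.cong refl)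
      fix f assume f: "f \<in> V ` J"
      have "(\<Sum>j\<in>{j\<in>J. V j = f}. \<beta> j * (V j w - d j)) = (\<Sum>j\<in>{j\<in>J. V j = f}. \<beta> j * f w - \<beta> j * d j)"
        by (intro sum.cong) (auto simp: algebra_simps)
      also have "\<dots> = A f * f w - D f" by (simp add: A_def D_def sum_subtractf sum_distrib_right)
      finally show "A f * (f w - C f) = (\<Sum>j\<in>{j\<in>J. V j = f}. \<beta> j * (V j w - d j))"
        using key[OF f] by (simp add: algebra_simps)
    qed
    also have "\<dots> = (\<Sum>j\<in>J. \<beta> j * (V j w - d j))"
      using sum.image_gen[OF fin, of "\<lambda>j. \<beta> j * (V j w - d j)" V] by simp
    finally show ?thesis .
  qed
  have "finite S \<and> S \<subseteq> L \<times> {UNIV} \<and>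
        (\<forall>i\<in>S. P (fst i) = \<infinity> \<longrightarrow> \<alpha> i \<ge> 0) \<and>
        (\<forall>i\<in>S. P (fst i) = -\<infinity> \<longrightarrow> \<alpha> i \<le> 0) \<and>
        (\<forall>i\<in>S. \<bar>P (fst i)\<bar> \<noteq> \<infinity> \<longrightarrow> P (fst i) = ereal (c i))"
  proof (intro conjI ballI impI)
    show "finite S" using fin unfolding S_def by simp
    show "S \<subseteq> L \<times> {UNIV}" using VL unfolding S_def by auto
  next
    fix i assume "i \<in> S" "P (fst i) = \<infinity>"
    then show "\<alpha> i \<ge> 0" using s1 unfolding S_def \<alpha>_def A_def by (auto intro!: sum_nonneg)
  next
    fix i assume "i \<in> S" "P (fst i) = -\<infinity>"
    then show "\<alpha> i \<le> 0" using s2 unfolding S_def \<alpha>_def A_def by (auto intro!: sum_nonpos)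
  next
    fix i assume "i \<in> S" "\<bar>P (fst i)\<bar> \<noteq> \<infinity>"
    then show "P (fst i) = ereal (c i)" unfolding c_def C_def by (cases "P (fst i)") auto
  qed
  then have "(SUP w. ereal (\<Sum>i\<in>S. \<alpha> i * indicator (snd i) w * (fst i w - c i))) \<ge> 0"
    using cm unfolding coherent1_marginal_def coherent1_def by blast
  then show ?thesis using eq by simp
qed

lemma M:
  assumes cm: "coherent1_marginal L P" and fin: "finite J" and VL: "\<forall>j\<in>J. V j \<in> L"
    and bnd: "\<forall>w. (\<Sum>j\<in>J. \<beta> j * V j w) \<le> k"
    and nm: "\<forall>j\<in>J. ereal (\<beta> j) * P (V j) \<noteq> -\<infinity>"
  shows "(\<Sum>j\<in>J. ereal (\<beta> j) * P (V j)) \<le> ereal k"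
proof (rule ccontr)
  assume gt: "\<not> ?thesis"
  define F where "F = {j\<in>J. \<bar>P (V j)\<bar> \<noteq> \<infinity>}"
  define I where "I = {j\<in>J. \<bar>P (V j)\<bar> = \<infinity> \<and> \<beta> j \<noteq> 0}"
  define sF where "sF = (\<Sum>j\<in>F. \<beta> j * real_of_ereal (P (V j)))"
  define K where "K = \<bar>sF\<bar> + \<bar>k\<bar> + 1"
  define d where "d j = (if j \<in> F then real_of_ereal (P (V j)) else if \<beta> j = 0 then 0 else K / \<beta> j)" for j
  have "(SUP w. ereal (\<Sum>j\<in>J. \<beta> j * (V j w - d j))) \<ge> 0"
  proof (rule G[OF cm fin VL]; intro ballI impI)
    fix j assume j: "j \<in> J" "P (V j) = \<infinity>"
    show "\<beta> j \<ge> 0"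
    proof (rule ccontr)
      assume "\<not> \<beta> j \<ge> 0" then have "ereal (\<beta> j) * P (V j) = -\<infinity>" using j by simp
      then show False using nm j(1) by blast
    qed
  next
    fix j assume j: "j \<in> J" "P (V j) = -\<infinity>"
    show "\<beta> j \<le> 0"
    proof (rule ccontr)
      assume "\<not> \<beta> j \<le> 0" then have "ereal (\<beta> j) * P (V j) = -\<infinity>" using j by simp
      then show False using nm j(1) by blast
    qed
  next
    fix j assume j: "j \<in> J" "\<bar>P (V j)\<bar> \<noteq> \<infinity>"
    then show "P (V j) = ereal (d j)" unfolding d_def F_def by (cases "P (V j)") auto
  qed
  have dsum: "(\<Sum>j\<in>J. \<beta> j * d j) = sF + K * card I"
  proof -
    have "(\<Sum>j\<in>J. \<beta> j * d j) = (\<Sum>j\<in>J. (if j \<in> F then \<beta> j * real_of_ereal (P (V j)) else 0) + (if j \<in> I then K else 0))"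
      by (intro sum.cong) (auto simp: d_def F_def I_def)
    also have "\<dots> = sF + K * card I"
      using fin unfolding sum.distrib sF_def
      by (simp add: sum.If_cases F_def I_def Int_def)
    finally show ?thesis .
  qed
  have big: "(\<Sum>j\<in>J. \<beta> j * d j) > k"
  proof (cases "I = {}")
    case False
    then have "card I \<ge> 1" using fin unfolding I_def by (simp add: Suc_le_eq card_gt_0_iff)
    then have "K * card I \<ge> K" using K_def by (simp add: mult_le_cancel_left1)
    then show ?thesis using dsum K_def by linarith
  next
    case True
    have "(\<Sum>j\<in>J. ereal (\<beta> j) * P (V j)) = (\<Sum>j\<in>J. ereal (if j \<in> F then \<beta> j * real_of_ereal (P (V j)) else 0))"
    proof (intro sum.cong refl)
      fix j assume j: "j \<in> J"
      show "ereal (\<beta> j) * P (V j) = ereal (if j \<in> F then \<beta> j * real_of_ereal (P (V j)) else 0)"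
      proof (cases "j \<in> F")
        case True then show ?thesis unfolding F_def by (cases "P (V j)") auto
      next
        case False then have "\<beta> j = 0" using \<open>I = {}\<close> j unfolding F_def I_def by auto
        then show ?thesis using False by (simp add: zero_ereal_def[symmetric])
      qed
    qed
    also have "\<dots> = ereal sF" unfolding sum_ereal sF_def using fin
      by (simp add: sum.If_cases F_def Int_def)
    finally have "sF > k" using gt by simp
    then show ?thesis using dsum True by simp
  qed
  have "(SUP w. ereal (\<Sum>j\<in>J. \<beta> j * (V j w - d j))) \<le> ereal (k - (\<Sum>j\<in>J. \<beta> j * d j))"
  proof (rule SUP_least)
    fix w
    have "(\<Sum>j\<in>J. \<beta> j * (V j w - d j)) = (\<Sum>j\<in>J. \<beta> j * V j w) - (\<Sum>j\<in>J. \<beta> j * d j)"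
      by (simp add: algebra_simps sum_subtractf)
    then show "ereal (\<Sum>j\<in>J. \<beta> j * (V j w - d j)) \<le> ereal (k - (\<Sum>j\<in>J. \<beta> j * d j))"
      using bnd by simp
  qed
  moreover have "ereal (k - (\<Sum>j\<in>J. \<beta> j * d j)) < 0" using big by simp
  ultimately show False using \<open>_ \<ge> 0\<close> by (meson leD order_trans)
qed

lemma U1:
  assumes cm: "coherent1_marginal L P" and "V \<in> L" and "\<forall>w. V w \<le> k"
  shows "P V \<le> ereal k"
proof (cases "P V = -\<infinity>")
  case False
  have "(\<Sum>j\<in>{0::nat}. ereal ((\<lambda>_. 1) j) * P ((\<lambda>_. V) j)) \<le> ereal k"
    by (rule M[OF cm]) (use assms False in auto)
  then show ?thesis by simp
qed simp

lemma U2: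
  assumes cm: "coherent1_marginal L P" and "V \<in> L" and "\<forall>w. V w \<ge> k"
  shows "P V \<ge> ereal k"
proof (cases "P V = \<infinity>")
  case False
  have "(\<Sum>j\<in>{0::nat}. ereal ((\<lambda>_. -1) j) * P ((\<lambda>_. V) j)) \<le> ereal (-k)"
    by (rule M[OF cm]) (use assms False in auto)
  then show ?thesis by (cases "P V") auto
qed simp

lemma Pconst:
  assumes cm: "coherent1_marginal L P" and "(\<lambda>w. c) \<in> L"
  shows "P (\<lambda>w. c) = ereal c"
  using U1[OF cm assms(2), of c] U2[OF cm assms(2), of c] by simp

lemma Mono:
  assumes cm: "coherent1_marginal L P" and XL: "X \<in> L" and YL: "Y \<in> L" and le: "\<forall>w. X w \<le> Y w"
  shows "P X \<le> P Y"
proof (cases "P X = -\<infinity> \<or> P Y = \<infinity>")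
  case False
  have "(\<Sum>j\<in>{0::nat,1}. ereal ((\<lambda>j. if j = 0 then 1 else -1) j) * P ((\<lambda>j. if j = 0 then X else Y) j)) \<le> ereal 0"
    by (rule M[OF cm]) (use assms False in \<open>auto simp: ereal_uminus_eq_reorder\<close>)
  then show ?thesis using False by (cases "P X"; cases "P Y") auto
qed auto

lemma ereal_neg_mult: "ereal (-a) * x = - (ereal a * x)"
  by (cases x) auto

lemma Lin:
  assumes cm: "coherent1_marginal L P" and XL: "X \<in> L" and YL: "Y \<in> L" and ZL: "(\<lambda>w. a * X w + b * Y w) \<in> L"
    and nc: "\<not> ({ereal a * P X, ereal b * P Y} = {\<infinity>, -\<infinity>})"
  shows "P (\<lambda>w. a * X w + b * Y w) = ereal a * P X + ereal b * P Y"
proof -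
  define Z where "Z = (\<lambda>w. a * X w + b * Y w)"
  define u where "u = ereal a * P X"
  define v where "v = ereal b * P Y"
  have nc': "\<not> (u = \<infinity> \<and> v = -\<infinity>)" "\<not> (u = -\<infinity> \<and> v = \<infinity>)" using nc unfolding u_def v_def by auto
  have "P Z \<le> u + v"
  proof (cases "P Z = -\<infinity> \<or> u = \<infinity> \<or> v = \<infinity>")
    case True then show ?thesis using nc' by (cases u; cases v) auto
  next
    case False
    have "(\<Sum>j\<in>{0::nat,1,2}. ereal ((\<lambda>j. if j = 0 then 1 else if j = 1 then -a else -b) j) *
        P ((\<lambda>j. if j = 0 then Z else if j = 1 then X else Y) j)) \<le> ereal 0"
      by (rule M[OF cm]) (use assms False in \<open>auto simp: Z_def ereal_neg_mult u_def v_def ereal_uminus_eq_reorder\<close>)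
    then have "P Z + (- u + - v) \<le> 0" by (simp add: ereal_neg_mult u_def v_def zero_ereal_def)
    then show ?thesis using False by (cases "P Z"; cases u; cases v) auto
  qed
  moreover have "u + v \<le> P Z"
  proof (cases "P Z = \<infinity> \<or> u = -\<infinity> \<or> v = -\<infinity>")
    case True then show ?thesis using nc' by (cases u; cases v) auto
  next
    case False
    have "(\<Sum>j\<in>{0::nat,1,2}. ereal ((\<lambda>j. if j = 0 then -1 else if j = 1 then a else b) j) *
        P ((\<lambda>j. if j = 0 then Z else if j = 1 then X else Y) j)) \<le> ereal 0"
      by (rule M[OF cm]) (use assms False in \<open>auto simp: Z_def ereal_neg_mult u_def v_def ereal_uminus_eq_reorder\<close>)
    then have "- P Z + (u + v) \<le> 0" by (simp add: ereal_neg_mult u_def v_def zero_ereal_def)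
    then show ?thesis using False by (cases "P Z"; cases u; cases v) auto
  qed
  ultimately show ?thesis unfolding Z_def u_def v_def by (rule antisym)
qed

lemma ediv_inf: "q > 0 \<Longrightarrow> x / ereal q = \<infinity> \<longleftrightarrow> x = \<infinity>"
  by (cases x) (auto simp: divide_ereal_def)
lemma ediv_minf: "q > 0 \<Longrightarrow> x / ereal q = -\<infinity> \<longleftrightarrow> x = -\<infinity>"
  by (cases x) (auto simp: divide_ereal_def)
lemma ediv_fin: "q > 0 \<Longrightarrow> x / ereal q = ereal c \<Longrightarrow> x = ereal (c * q)"
  by (cases x) (auto simp: divide_ereal_def field_simps)
lemma ediv_fin2: "q > 0 \<Longrightarrow> \<bar>x / ereal q\<bar> \<noteq> \<infinity> \<longleftrightarrow> \<bar>x\<bar> \<noteq> \<infinity>"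
  by (cases x) (auto simp: divide_ereal_def)
lemma ediv_mono: "q > 0 \<Longrightarrow> x \<le> y \<Longrightarrow> x / ereal q \<le> y / ereal q"
  by (cases x; cases y) (auto simp: divide_ereal_def divide_right_mono)
lemma ediv_add: "q > 0 \<Longrightarrow> (x + y) / ereal q = x / ereal q + y / ereal q"
  by (cases x; cases y) (auto simp: divide_ereal_def distrib_right)
lemma ediv_mult: "q > 0 \<Longrightarrow> ereal a * (x / ereal q) = (ereal a * x) / ereal q"
  by (cases x) (auto simp: divide_ereal_def)

theorem proposition6p1:
  fixes L :: "('w \<Rightarrow> real) set" and P :: "('w \<Rightarrow> real) \<Rightarrow> ereal"
  assumes "rv_linear_space L"
    and "coherent1_marginal L P"
    and "\<forall>X\<in>L. \<forall>B\<in>{B. indicator B \<in> L \<and> P (indicator B) > 0}.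
           (\<lambda>w. X w * indicator B w) \<in> L"
  shows "fa_cond_expectation L {B. indicator B \<in> L \<and> P (indicator B) > 0} P
           (\<lambda>X B. P (\<lambda>w. X w * indicator B w) / P (indicator B))"
proof -
  note ls = assms(1) and cm = assms(2) and cl = assms(3)
  define BB where "BB = {B. indicator B \<in> L \<and> P (indicator B) > 0}"
  define Lc where "Lc = (\<lambda>X B. P (\<lambda>w. X w * indicator B w) / P (indicator B))"
  have add: "\<And>X Y. X \<in> L \<Longrightarrow> Y \<in> L \<Longrightarrow> (\<lambda>w. X w + Y w) \<in> L"
    and smul: "\<And>a X. X \<in> L \<Longrightarrow> (\<lambda>w. a * X w) \<in> L"
    and cst: "\<And>c. (\<lambda>w. c) \<in> L" using ls unfolding rv_linear_space_def by auto
  have lin: "\<And>a b X Y. X \<in> L \<Longrightarrow> Y \<in> L \<Longrightarrow> (\<lambda>w. a * X w + b * Y w) \<in> L"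
    using add smul by blast
  have clB: "\<And>X B. X \<in> L \<Longrightarrow> B \<in> BB \<Longrightarrow> (\<lambda>w. X w * indicator B w) \<in> L"
    using cl unfolding BB_def by blast
  have pB: "\<exists>p. P (indicator B) = ereal p \<and> p > 0" if B: "B \<in> BB" for B
  proof -
    have "P (indicator B) \<le> ereal 1"
      by (rule U1[OF cm]) (use B in \<open>auto simp: BB_def indicator_def\<close>)
    moreover have "P (indicator B) > 0" using B by (simp add: BB_def)
    ultimately show ?thesis by (cases "P (indicator B)") auto
  qed
  have ind0: "indicator {} = (\<lambda>w::'w. 0::real)" by auto
  have faP: "fa_expectation L P"
    unfolding fa_expectation_def
  proof (intro conjI ballI allI impI)
    fix X Y assume "X \<in> L" "Y \<in> L" "\<forall>w. X w \<le> Y w"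
    then show "P X \<le> P Y" using Mono[OF cm] by blast
  next
    fix X Y a b assume "X \<in> L" "Y \<in> L" "\<not> ({ereal a * P X, ereal b * P Y} = {\<infinity>, -\<infinity>})"
    then show "P (\<lambda>w. a * X w + b * Y w) = ereal a * P X + ereal b * P Y"
      using Lin[OF cm] lin by blast
  next
    show "P (\<lambda>w. 1) = 1" using Pconst[OF cm cst, of 1] by (simp add: one_ereal_def)
  qed
  have ind_mult: "(\<lambda>w. X w * indicator B w * indicator B w) = (\<lambda>w. X w * indicator B w)" for X :: "'w \<Rightarrow> real" and B :: "'w set"
    by (rule ext) (simp add: indicator_def)
  have condB: "fa_expectation L (\<lambda>X. Lc X B) \<and> (\<forall>X\<in>L. Lc (\<lambda>w. X w * indicator B w) B = Lc X B)"
    if B: "B \<in> BB" for B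
  proof -
    obtain p where p: "P (indicator B) = ereal p" "p > 0" using pB[OF B] by blast
    have Lc_eq: "Lc X B = P (\<lambda>w. X w * indicator B w) / ereal p" for X unfolding Lc_def p(1) ..
    have "fa_expectation L (\<lambda>X. Lc X B)"
      unfolding fa_expectation_def
    proof (intro conjI ballI allI impI)
      fix X Y assume XY: "X \<in> L" "Y \<in> L" "\<forall>w. X w \<le> Y w"
      have "P (\<lambda>w. X w * indicator B w) \<le> P (\<lambda>w. Y w * indicator B w)"
        by (rule Mono[OF cm clB[OF XY(1) B] clB[OF XY(2) B]]) (use XY in \<open>auto simp: indicator_def\<close>)
      then show "Lc X B \<le> Lc Y B" unfolding Lc_eq using ediv_mono[OF p(2)] by blast
    next
      fix X Y a b assume XY: "X \<in> L" "Y \<in> L" and nc: "\<not> ({ereal a * Lc X B, ereal b * Lc Y B} = {\<infinity>, -\<infinity>})"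
      define u where "u = ereal a * P (\<lambda>w. X w * indicator B w)"
      define v where "v = ereal b * P (\<lambda>w. Y w * indicator B w)"
      have e1: "ereal a * Lc X B = u / ereal p" unfolding Lc_eq u_def using ediv_mult[OF p(2)] by simp
      have e2: "ereal b * Lc Y B = v / ereal p" unfolding Lc_eq v_def using ediv_mult[OF p(2)] by simp
      have nc2: "\<not> ({u, v} = {\<infinity>, -\<infinity>})"
      proof
        assume "{u, v} = {\<infinity>, -\<infinity>}"
        then have "(u = \<infinity> \<and> v = -\<infinity>) \<or> (u = -\<infinity> \<and> v = \<infinity>)" by (auto simp: doubleton_eq_iff)
        then have "{u / ereal p, v / ereal p} = {\<infinity>, -\<infinity>}" using ediv_inf[OF p(2)] ediv_minf[OF p(2)] using p(2) by auto
        then show False using nc e1 e2 by simp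
      qed
      have fe: "(\<lambda>w. (a * X w + b * Y w) * indicator B w) = (\<lambda>w. a * (X w * indicator B w) + b * (Y w * indicator B w))"
        by (auto simp: algebra_simps)
      have "P (\<lambda>w. (a * X w + b * Y w) * indicator B w) = u + v"
        unfolding fe u_def v_def
        by (rule Lin[OF cm clB[OF XY(1) B] clB[OF XY(2) B] lin[OF clB[OF XY(1) B] clB[OF XY(2) B]]])
           (use nc2 in \<open>simp add: u_def v_def\<close>)
      then show "Lc (\<lambda>w. a * X w + b * Y w) B = ereal a * Lc X B + ereal b * Lc Y B"
        unfolding e1 e2 unfolding Lc_eq by (simp add: ediv_add[OF p(2)])
    next
      have "(\<lambda>w. 1 * indicator B w) = (indicator B :: 'w \<Rightarrow> real)" by auto
      then show "Lc (\<lambda>w. 1) B = 1" unfolding Lc_eq using p by (simp add: divide_ereal_def)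
    qed
    moreover have "\<forall>X\<in>L. Lc (\<lambda>w. X w * indicator B w) B = Lc X B"
      unfolding Lc_def by (simp add: ind_mult)
    ultimately show ?thesis by blast
  qed
  have coh: "coherent1 (L \<times> BB) Lc"
    unfolding coherent1_def
  proof (intro conjI allI impI ballI)
    fix i assume "i \<in> L \<times> BB"
    then have "snd i \<in> BB" by auto
    then obtain p where "P (indicator (snd i)) = ereal p" "p > 0" using pB by blast
    then show "snd i \<noteq> {}" using Pconst[OF cm cst, of 0] ind0 by (auto simp: zero_ereal_def)
  next
    fix S :: "(('w \<Rightarrow> real) \<times> 'w set) set" and \<alpha> c :: "('w \<Rightarrow> real) \<times> 'w set \<Rightarrow> real"
    assume H: "finite S \<and> S \<subseteq> L \<times> BB \<and>
        (\<forall>i\<in>S. Lc (fst i) (snd i) = \<infinity> \<longrightarrow> 0 \<le> \<alpha> i) \<and>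
        (\<forall>i\<in>S. Lc (fst i) (snd i) = - \<infinity> \<longrightarrow> \<alpha> i \<le> 0) \<and>
        (\<forall>i\<in>S. \<bar>Lc (fst i) (snd i)\<bar> \<noteq> \<infinity> \<longrightarrow> Lc (fst i) (snd i) = ereal (c i))"
    define pp where "pp i = real_of_ereal (P (indicator (snd i)))" for i :: "('w \<Rightarrow> real) \<times> 'w set"
    have ppi: "P (indicator (snd i)) = ereal (pp i) \<and> pp i > 0" if "i \<in> S" for i
    proof -
      have "snd i \<in> BB" using H that by auto
      then obtain p where "P (indicator (snd i)) = ereal p" "p > 0" using pB by blast
      then show ?thesis unfolding pp_def by simp
    qed
    have Lci: "Lc (fst i) (snd i) = P (\<lambda>w. fst i w * indicator (snd i) w) / ereal (pp i)" if "i \<in> S" for i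
      unfolding Lc_def using ppi[OF that] by simp
    define J where "J = S \<times> {True, False}"
    define V where "V j = (if snd j then (\<lambda>w. fst (fst j) w * indicator (snd (fst j)) w) else indicator (snd (fst j)))" for j :: "(('w \<Rightarrow> real) \<times> 'w set) \<times> bool"
    define \<beta> where "\<beta> j = (if snd j then \<alpha> (fst j) else - (\<alpha> (fst j) * c (fst j)))" for j
    define d where "d j = (if snd j then c (fst j) * pp (fst j) else pp (fst j))" for j
    have G0: "(SUP w. ereal (\<Sum>j\<in>J. \<beta> j * (V j w - d j))) \<ge> 0"
    proof (rule G[OF cm]; (intro ballI impI)?)
      show "finite J" using H unfolding J_def by auto
    next
      fix j assume j: "j \<in> J"
      then have i: "fst j \<in> S" unfolding J_def by auto
      then have iL: "fst (fst j) \<in> L" "snd (fst j) \<in> BB" using H by auto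
      show "V j \<in> L" using clB[OF iL] iL unfolding V_def BB_def by auto
    next
      fix j assume j: "j \<in> J" and inf: "P (V j) = \<infinity>"
      then have i: "fst j \<in> S" unfolding J_def by auto
      show "\<beta> j \<ge> 0"
      proof (cases "snd j")
        case True
        then have "Lc (fst (fst j)) (snd (fst j)) = \<infinity>"
          using inf Lci[OF i] ediv_inf ppi[OF i] by (simp add: V_def)
        then show ?thesis using H i True by (simp add: \<beta>_def)
      next
        case False then show ?thesis using inf ppi[OF i] by (simp add: V_def)
      qed
    next
      fix j assume j: "j \<in> J" and inf: "P (V j) = -\<infinity>"
      then have i: "fst j \<in> S" unfolding J_def by auto
      show "\<beta> j \<le> 0"
      proof (cases "snd j")
        case True
        then have "Lc (fst (fst j)) (snd (fst j)) = -\<infinity>"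
          using inf Lci[OF i] ediv_minf ppi[OF i] by (simp add: V_def)
        then show ?thesis using H i True by (simp add: \<beta>_def)
      next
        case False then show ?thesis using inf ppi[OF i] by (simp add: V_def)
      qed
    next
      fix j assume j: "j \<in> J" and fin: "\<bar>P (V j)\<bar> \<noteq> \<infinity>"
      then have i: "fst j \<in> S" unfolding J_def by auto
      show "P (V j) = ereal (d j)"
      proof (cases "snd j")
        case True
        then have "\<bar>Lc (fst (fst j)) (snd (fst j))\<bar> \<noteq> \<infinity>"
          using fin Lci[OF i] ediv_fin2 ppi[OF i] by (simp add: V_def)
        then have "Lc (fst (fst j)) (snd (fst j)) = ereal (c (fst j))" using H i by auto
        then have "P (\<lambda>w. fst (fst j) w * indicator (snd (fst j)) w) = ereal (c (fst j) * pp (fst j))"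
          using Lci[OF i] ediv_fin ppi[OF i] by auto
        then show ?thesis using True by (simp add: V_def d_def)
      next
        case False then show ?thesis using ppi[OF i] by (simp add: V_def d_def)
      qed
    qed
    have "(\<Sum>j\<in>J. \<beta> j * (V j w - d j)) = (\<Sum>i\<in>S. \<alpha> i * indicator (snd i) w * (fst i w - c i))" for w
    proof -
      have "(\<Sum>j\<in>J. \<beta> j * (V j w - d j)) = (\<Sum>i\<in>S. \<Sum>t\<in>{True, False}. \<beta> (i, t) * (V (i, t) w - d (i, t)))"
        unfolding J_def by (subst sum.cartesian_product) (simp add: case_prod_unfold)
      also have "\<dots> = (\<Sum>i\<in>S. \<alpha> i * indicator (snd i) w * (fst i w - c i))"
        by (intro sum.cong refl) (simp add: \<beta>_def V_def d_def algebra_simps)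
      finally show ?thesis .
    qed
    then show "(SUP w. ereal (\<Sum>i\<in>S. \<alpha> i * indicator (snd i) w * (fst i w - c i))) \<ge> 0"
      using G0 by simp
  qed
  have nonempty: "\<forall>B\<in>BB. B \<noteq> {}"
  proof
    fix B assume "B \<in> BB"
    then obtain p where "P (indicator B) = ereal p" "p > 0" using pB by blast
    then show "B \<noteq> {}" using Pconst[OF cm cst, of 0] ind0 by (auto simp: zero_ereal_def)
  qed
  have univ: "UNIV \<in> BB"
  proof -
    have "indicator UNIV = (\<lambda>w::'w. 1::real)" by auto
    then show ?thesis unfolding BB_def using cst Pconst[OF cm cst, of 1] by auto
  qed
  show ?thesis
    unfolding fa_cond_expectation_def BB_def[symmetric] Lc_def[symmetric]
    using ls nonempty univ clB faP condB coh by blast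
qed

end
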